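(* Let $(p_x,p'_x)$ and $(p_y,p'_y)$ be pairs of positive integers with $|p_x-p'_x|=|p_y-p'_y|=1$, and let $X=\alpha_{(p_x,p'_x)}(Y)$, $Y=\alpha_{(p_y,p'_y)}(Z)$ be finite Sturmian words, $Z$ a finite word. Then the number of original center occurrences in $X$ (equivalently, of original maximal palindrome occurrences in $X$), relative to $X=\alpha_{(p_x,p'_x)}(Y)$, equals $$2(p_x-1)\bigl(|Z|_a\,p_y+|Z|_b\,p'_y\bigr)+2|Z|\,p'_x.$$
   Context: $\alpha_{(p,p')}$ is the morphism $a\mapsto a^pb$, $b\mapsto a^{p'}b$. A Sturmian word is a right-infinite aperiodic word over $\{a,b\}$ with exactly $n+1$ factors of each length $n$; a finite Sturmian word is a finite factor of one. $|W|_l$ is the number of occurrences of letter $l$ in $W$. A center occurrence in a word is an occurrence of one of the factors $a$, $b$, $aa$; each is the center of exactly one maximal palindrome occurrence. Write $Y=y_1\cdots y_m$ and $X=\alpha(y_1)\cdots\alpha(y_m)$ with $\alpha=\alpha_{(p_x,p'_x)}$, $\alpha(y_j)$ occupying positions $s_j+1,\dots,s_j+|\alpha(y_j)|$, $s_j=\sum_{t<j}|\alpha(y_t)|$. The reflection of an occurrence $y_j=a$ (resp. $y_j=b$) is the center (middle letter if odd length, middle two letters if even length) of the run $a^{p_x}$ (resp. $a^{p'_x}$) at positions $s_j+1,\dots,s_j+p_x$ (resp. $s_j+p'_x$); the reflection of an occurrence $y_jy_{j+1}=aa$ is the letter $b$ at position $s_j+p_x+1$. A center occurrence of $X$ is original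 if it is not the reflection of any center occurrence of $Y$. *)

theory Defs
  imports Main
begin

datatype letter = a | b

definition alpha_img :: "nat \<Rightarrow> nat \<Rightarrow> letter \<Rightarrow> letter list" where
  "alpha_img p p' l = (case l of a \<Rightarrow> replicate p a @ [b] | b \<Rightarrow> replicate p' a @ [b])"

definition alpha :: "nat \<Rightarrow> nat \<Rightarrow> letter list \<Rightarrow> letter list" where
  "alpha p p' w = concat (map (alpha_img p p') w)"

definition factors_of_length :: "(nat \<Rightarrow> letter) \<Rightarrow> nat \<Rightarrow> letter list set" where
  "factors_of_length w n = {map w [i..<i+n] | i. True}"

definition aperiodic :: "(nat \<Rightarrow> letter) \<Rightarrow> bool" where
  "aperiodic w \<longleftrightarrow> \<not> (\<exists>q>0. \<exists>N. \<forall>i\<ge>N. w (i + q) = w i)"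

definition sturmian :: "(nat \<Rightarrow> letter) \<Rightarrow> bool" where
  "sturmian w \<longleftrightarrow> aperiodic w \<and> (\<forall>n. card (factors_of_length w n) = n + 1)"

definition finite_sturmian :: "letter list \<Rightarrow> bool" where
  "finite_sturmian u \<longleftrightarrow> (\<exists>w i. sturmian w \<and> u = map w [i..<i + length u])"

text \<open>Occurrences are pairs (start position, length), positions 0-based.
  Center occurrences: occurrences of the factors a, b, aa.\<close>
definition center_occs :: "letter list \<Rightarrow> (nat \<times> nat) set" where
  "center_occs X = {(i, 1) | i. i < length X} \<union>
     {(i, 2) | i. i + 1 < length X \<and> X ! i = a \<and> X ! (i + 1) = a}"

definition run_center :: "nat \<Rightarrow> nat \<Rightarrow> nat \<times> nat" where
  "run_center s r = (if odd r then (s + r div 2, 1) else (s + r div 2 - 1, 2))"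

definition alpha_start :: "nat \<Rightarrow> nat \<Rightarrow> letter list \<Rightarrow> nat \<Rightarrow> nat" where
  "alpha_start p p' Y j = length (alpha p p' (take j Y))"

definition reflection :: "nat \<Rightarrow> nat \<Rightarrow> letter list \<Rightarrow> nat \<times> nat \<Rightarrow> nat \<times> nat" where
  "reflection p p' Y occ =
     (let j = fst occ; s = alpha_start p p' Y j in
      if snd occ = 2 then (s + p, 1)
      else if Y ! j = a then run_center s p
      else run_center s p')"

definition original_center_occs :: "nat \<Rightarrow> nat \<Rightarrow> letter list \<Rightarrow> (nat \<times> nat) set" where
  "original_center_occs p p' Y =
     center_occs (alpha p p' Y) - reflection p p' Y ` center_occs Y"

end

theory Submission
  imports Defs
begin

definition AA :: "letter list \<Rightarrow> nat set" where
  "AA W = {i. i + 1 < length W \<and> W ! i = a \<and> W ! (i + 1) = a}"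

fun aa_cnt :: "letter list \<Rightarrow> nat" where
  "aa_cnt [] = 0"
| "aa_cnt [x] = 0"
| "aa_cnt (x # y # xs) = (if x = a \<and> y = a then 1 else 0) + aa_cnt (y # xs)"

lemma AA_fin: "finite (AA W)"
  by (rule finite_subset[of _ "{..<length W}"]) (auto simp: AA_def)

lemma AA_Cons2: "AA (x # y # xs) =
   (if x = a \<and> y = a then insert 0 (Suc ` AA (y # xs)) else Suc ` AA (y # xs))"
proof -
  have "i \<in> AA (x # y # xs) \<longleftrightarrow> (i = 0 \<and> x = a \<and> y = a) \<or> (\<exists>j. i = Suc j \<and> j \<in> AA (y # xs))" for i
    by (cases i) (auto simp: AA_def)
  then show ?thesis by (auto simp: image_iff)
qed

lemma card_AA: "card (AA W) = aa_cnt W"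
proof (induction W rule: aa_cnt.induct)
  case 1 then show ?case by (simp add: AA_def)
next
  case (2 x) then show ?case by (simp add: AA_def)
next
  case (3 x y xs)
  have c: "card (Suc ` AA (y # xs)) = aa_cnt (y # xs)"
    using 3 by (simp add: card_image)
  show ?case using c AA_fin[of "y # xs"] by (auto simp: AA_Cons2)
qed

lemma aa_cnt_append: "aa_cnt (u @ v) = aa_cnt u + aa_cnt v +
   (if u \<noteq> [] \<and> v \<noteq> [] \<and> last u = a \<and> hd v = a then 1 else 0)"
proof (induction u rule: aa_cnt.induct)
  case 1 then show ?case by simp
next
  case (2 x) then show ?case by (cases v) auto
next
  case (3 x y xs) then show ?case by auto
qed

lemma aa_cnt_rep: "aa_cnt (replicate p a @ [b]) = p - 1"
proof (induction p)
  case 0 then show ?case by simp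
next
  case (Suc p) then show ?case by (cases p) auto
qed

lemma alpha_Nil[simp]: "alpha p p' [] = []" by (simp add: alpha_def)
lemma alpha_Cons[simp]: "alpha p p' (x # w) = alpha_img p p' x @ alpha p p' w"
  by (simp add: alpha_def)
lemma alpha_append[simp]: "alpha p p' (u @ w) = alpha p p' u @ alpha p p' w"
  by (simp add: alpha_def)

lemma alpha_img_ne: "alpha_img p p' x \<noteq> []" by (cases x) (auto simp: alpha_img_def)
lemma alpha_img_last: "last (alpha_img p p' x) = b" by (cases x) (auto simp: alpha_img_def)

lemma aa_img: "aa_cnt (alpha_img p p' x) = (case x of a \<Rightarrow> p - 1 | b \<Rightarrow> p' - 1)"
  by (cases x) (simp_all only: alpha_img_def aa_cnt_rep letter.case)

lemma aa_cnt_alpha: "aa_cnt (alpha p p' W) = count_list W a * (p - 1) + count_list W b * (p' - 1)"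
proof (induction W)
  case Nil then show ?case by simp
next
  case (Cons x W)
  have "aa_cnt (alpha p p' (x # W)) = aa_cnt (alpha_img p p' x) + aa_cnt (alpha p p' W)"
    using alpha_img_ne[of p p' x] alpha_img_last[of p p' x]
    by (simp only: alpha_Cons aa_cnt_append) simp
  then show ?case using Cons by (cases x) (auto simp: aa_img)
qed

lemma cnt_rep: "count_list (replicate n x) x = n" by (induction n) auto

lemma len_alpha: "length (alpha p p' W) = count_list W a * (p + 1) + count_list W b * (p' + 1)"
  by (induction W) (auto simp: alpha_img_def split: letter.splits)

lemma cnt_a_alpha: "count_list (alpha p p' W) a = count_list W a * p + count_list W b * p'"
  by (induction W) (auto simp: alpha_img_def cnt_rep split: letter.splits)

lemma cnt_b_alpha: "count_list (alpha p p' W) b = length W"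
  by (induction W) (auto simp: alpha_img_def split: letter.splits)

lemma len_cnt: "length W = count_list W a + count_list W b"
proof (induction W)
  case (Cons x W) then show ?case by (cases x) auto
qed simp

lemma card_center: "card (center_occs W) = length W + aa_cnt W"
proof -
  have e: "center_occs W = (\<lambda>i. (i, 1::nat)) ` {..<length W} \<union> (\<lambda>i. (i, 2)) ` AA W"
    by (auto simp: center_occs_def AA_def)
  have "card (center_occs W) = card ((\<lambda>i. (i, 1::nat)) ` {..<length W}) + card ((\<lambda>i. (i, 2::nat)) ` AA W)"
    unfolding e by (rule card_Un_disjoint) (auto simp: AA_fin)
  also have "\<dots> = length W + card (AA W)"
    by (simp add: card_image inj_on_def)
  finally show ?thesis by (simp add: card_AA)
qed

lemma center_fin: "finite (center_occs W)"
proof -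
  have "center_occs W \<subseteq> {..<length W} \<times> {1, 2}" by (auto simp: center_occs_def)
  then show ?thesis by (rule finite_subset) auto
qed

lemma start_Suc: "j < length Y \<Longrightarrow>
  alpha_start p p' Y (Suc j) = alpha_start p p' Y j + length (alpha_img p p' (Y ! j))"
  by (simp add: alpha_start_def take_Suc_conv_app_nth)

lemma start_mono: "j \<le> j' \<Longrightarrow> alpha_start p p' Y j \<le> alpha_start p p' Y j'"
proof -
  assume "j \<le> j'"
  then have "take j' Y = take j Y @ drop j (take j' Y)"
    by (metis append_take_drop_id min.absorb1 take_take)
  then show ?thesis unfolding alpha_start_def by (metis alpha_append length_append le_add1)
qed

lemma start_len: "alpha_start p p' Y (length Y) = length (alpha p p' Y)"
  by (simp add: alpha_start_def)

lemma nth_block: "j < length Y \<Longrightarrow> k < length (alpha_img p p' (Y ! j)) \<Longrightarrow>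
  alpha p p' Y ! (alpha_start p p' Y j + k) = alpha_img p p' (Y ! j) ! k"
proof -
  assume j: "j < length Y" and k: "k < length (alpha_img p p' (Y ! j))"
  have "Y = take j Y @ Y ! j # drop (Suc j) Y" using j by (simp add: id_take_nth_drop)
  then have "alpha p p' Y = alpha p p' (take j Y) @ alpha_img p p' (Y ! j) @ alpha p p' (drop (Suc j) Y)"
    by (metis alpha_Cons alpha_append)
  then show ?thesis using k by (simp add: alpha_start_def nth_append)
qed

lemma block_end: "j < length Y \<Longrightarrow>
  alpha_start p p' Y j + length (alpha_img p p' (Y ! j)) \<le> length (alpha p p' Y)"
  by (metis Suc_leI start_Suc start_len start_mono)

definition rl :: "nat \<Rightarrow> nat \<Rightarrow> letter \<Rightarrow> nat" where
  "rl p p' x = (case x of a \<Rightarrow> p | b \<Rightarrow> p')"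

lemma img_len: "length (alpha_img p p' x) = rl p p' x + 1"
  by (cases x) (auto simp: alpha_img_def rl_def)

lemma img_nth_a: "k < rl p p' x \<Longrightarrow> alpha_img p p' x ! k = a"
  by (cases x) (auto simp: alpha_img_def rl_def nth_append)

lemma img_nth_b: "alpha_img p p' x ! rl p p' x = b"
  by (cases x) (auto simp: alpha_img_def rl_def nth_append)

lemma refl1: "l = 1 \<Longrightarrow> reflection p p' Y (j, l) = run_center (alpha_start p p' Y j) (rl p p' (Y ! j))"
  by (cases "Y ! j") (auto simp: reflection_def rl_def)

lemma refl1': "reflection p p' Y (j, 1) = run_center (alpha_start p p' Y j) (rl p p' (Y ! j))"
  by (cases "Y ! j") (auto simp: reflection_def rl_def)

lemma refl2: "reflection p p' Y (j, 2) = (alpha_start p p' Y j + p, 1)"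
  by (simp add: reflection_def)

lemma rc_fst: "r > 0 \<Longrightarrow> fst (run_center s r) = s + (r - 1) div 2"
  by (auto simp: run_center_def elim!: evenE oddE)

lemma rl_pos: "p > 0 \<Longrightarrow> p' > 0 \<Longrightarrow> rl p p' x > 0"
  by (cases x) (auto simp: rl_def)

lemma refl_in:
  assumes "p > 0" "p' > 0" "oc \<in> center_occs Y"
  shows "reflection p p' Y oc \<in> center_occs (alpha p p' Y)"
proof -
  obtain j l where oc: "oc = (j, l)" by (cases oc)
  have j: "j < length Y" using assms(3) oc by (auto simp: center_occs_def)
  define s where "s = alpha_start p p' Y j"
  define r where "r = rl p p' (Y ! j)"
  have r0: "r > 0" using assms rl_pos r_def by auto
  have end_: "s + r + 1 \<le> length (alpha p p' Y)"
    using block_end[OF j, of p p'] img_len s_def r_def by simp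
  have na: "alpha p p' Y ! (s + k) = a" if "k < r" for k
    using nth_block[OF j, of k p p'] img_nth_a[of k p p' "Y ! j"] that img_len s_def r_def by simp
  show ?thesis
  proof (cases "l = 2")
    case True
    then have "Y ! j = a" using assms(3) oc by (auto simp: center_occs_def)
    then have "r = p" by (simp add: r_def rl_def)
    then show ?thesis using True oc refl2[of p p' Y j] end_ assms(1)
      by (auto simp: center_occs_def s_def)
  next
    case False
    then have l: "l = 1" using assms(3) oc by (auto simp: center_occs_def)
    show ?thesis
    proof (cases "odd r")
      case True
      then show ?thesis using oc l refl1'[of p p' Y j] end_
        by (auto simp: center_occs_def run_center_def s_def[symmetric] r_def[symmetric])
    next
      case False
      then obtain m where m: "r = 2 * m" by auto
      with r0 have "m > 0" by auto
      have "alpha p p' Y ! (s + (m - 1)) = a" "alpha p p' Y ! (s + (m - 1) + 1) = a"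
        using na[of "m - 1"] na[of m] m \<open>m > 0\<close> by (auto simp: add.assoc)
      then show ?thesis using oc l refl1'[of p p' Y j] end_ m \<open>m > 0\<close> False refl1'[of p p' Y j]
        by (auto simp: center_occs_def run_center_def s_def[symmetric] r_def[symmetric])
    qed
  qed
qed

lemma refl_pos:
  assumes "p > 0" "p' > 0" "(j, l) \<in> center_occs Y"
  shows "alpha_start p p' Y j \<le> fst (reflection p p' Y (j, l))"
    "fst (reflection p p' Y (j, l)) < alpha_start p p' Y (Suc j)"
    "l = 2 \<Longrightarrow> fst (reflection p p' Y (j, l)) = alpha_start p p' Y j + p"
    "l = 1 \<Longrightarrow> Y ! j = a \<Longrightarrow> fst (reflection p p' Y (j, l)) < alpha_start p p' Y j + p"
proof -
  have j: "j < length Y" using assms(3) by (auto simp: center_occs_def)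
  have l: "l = 1 \<or> (l = 2 \<and> Y ! j = a)" using assms(3) by (auto simp: center_occs_def)
  have r0: "rl p p' (Y ! j) > 0" using assms rl_pos by auto
  have ss: "alpha_start p p' Y (Suc j) = alpha_start p p' Y j + rl p p' (Y ! j) + 1"
    using start_Suc[OF j] img_len by simp
  have rl1: "(rl p p' (Y ! j) - 1) div 2 < rl p p' (Y ! j)" using r0 by linarith
  show "alpha_start p p' Y j \<le> fst (reflection p p' Y (j, l))"
    using l r0 by (auto simp: refl1 refl2 rc_fst)
  show "fst (reflection p p' Y (j, l)) < alpha_start p p' Y (Suc j)"
    using l r0 ss rl1 by (auto simp: refl1 refl2 rc_fst rl_def)
  show "l = 2 \<Longrightarrow> fst (reflection p p' Y (j, l)) = alpha_start p p' Y j + p"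
    by (simp add: refl2)
  show "l = 1 \<Longrightarrow> Y ! j = a \<Longrightarrow> fst (reflection p p' Y (j, l)) < alpha_start p p' Y j + p"
    using r0 rl1 by (auto simp: refl1 rc_fst rl_def)
qed

lemma refl_inj:
  assumes "p > 0" "p' > 0"
  shows "inj_on (reflection p p' Y) (center_occs Y)"
proof (rule inj_onI)
  fix x y assume x: "x \<in> center_occs Y" and y: "y \<in> center_occs Y"
    and e: "reflection p p' Y x = reflection p p' Y y"
  obtain j1 l1 where x': "x = (j1, l1)" by (cases x)
  obtain j2 l2 where y': "y = (j2, l2)" by (cases y)
  note P1 = refl_pos[OF assms x[unfolded x']]
  note P2 = refl_pos[OF assms y[unfolded y']]
  have "\<not> j1 < j2"
  proof
    assume "j1 < j2"
    then have "alpha_start p p' Y (Suc j1) \<le> alpha_start p p' Y j2" by (simp add: start_mono)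
    then show False using P1(2) P2(1) e x' y' by simp
  qed
  moreover have "\<not> j2 < j1"
  proof
    assume "j2 < j1"
    then have "alpha_start p p' Y (Suc j2) \<le> alpha_start p p' Y j1" by (simp add: start_mono)
    then show False using P1(1) P2(2) e x' y' by simp
  qed
  ultimately have j: "j1 = j2" by simp
  have l1: "l1 = 1 \<or> (l1 = 2 \<and> Y ! j1 = a)" using x x' by (auto simp: center_occs_def)
  have l2: "l2 = 1 \<or> (l2 = 2 \<and> Y ! j2 = a)" using y y' by (auto simp: center_occs_def)
  have "l1 = l2"
  proof (rule ccontr)
    assume "l1 \<noteq> l2"
    then show False using l1 l2 P1(3,4) P2(3,4) e x' y' j by auto
  qed
  then show "x = y" using x' y' j by simp
qed

theorem lemma3:
  fixes px px' py py' :: nat and X Y Z :: "letter list"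
  assumes "px > 0" "px' > 0" "py > 0" "py' > 0"
    and "\<bar>int px - int px'\<bar> = 1" "\<bar>int py - int py'\<bar> = 1"
    and "X = alpha px px' Y" "Y = alpha py py' Z"
    and "finite_sturmian X" "finite_sturmian Y"
  shows "card (original_center_occs px px' Y)
           = 2 * (px - 1) * (count_list Z a * py + count_list Z b * py') + 2 * length Z * px'"
proof -
  have sub: "reflection px px' Y ` center_occs Y \<subseteq> center_occs (alpha px px' Y)"
    using refl_in[OF assms(1,2)] by blast
  have "card (original_center_occs px px' Y)
      = card (center_occs (alpha px px' Y)) - card (reflection px px' Y ` center_occs Y)"
    unfolding original_center_occs_def by (rule card_Diff_subset) (use sub center_fin in \<open>auto intro: finite_subset\<close>)
  also have "card (reflection px px' Y ` center_occs Y) = card (center_occs Y)"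
    by (rule card_image[OF refl_inj[OF assms(1,2)]])
  finally have c: "card (original_center_occs px px' Y) =
     (length (alpha px px' Y) + aa_cnt (alpha px px' Y)) - (length Y + aa_cnt Y)"
    by (simp add: card_center)
  define A where "A = count_list Z a"
  define B where "B = count_list Z b"
  have Ya: "count_list Y a = A * py + B * py'" using assms(8) by (simp add: cnt_a_alpha A_def B_def)
  have Yb: "count_list Y b = A + B" using assms(8) len_cnt[of Z] by (simp add: cnt_b_alpha A_def B_def)
  have LZ: "length Z = A + B" using len_cnt[of Z] A_def B_def by simp
  obtain qx where qx: "px = Suc qx" using assms(1) by (cases px) auto
  obtain qx' where qx': "px' = Suc qx'" using assms(2) by (cases px') auto
  obtain qy where qy: "py = Suc qy" using assms(3) by (cases py) auto
  obtain qy' where qy': "py' = Suc qy'" using assms(4) by (cases py') auto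
  have LY: "length Y = A * (py + 1) + B * (py' + 1)" using assms(8) by (simp add: len_alpha A_def B_def)
  have aY: "aa_cnt Y = A * (py - 1) + B * (py' - 1)" using assms(8) by (simp add: aa_cnt_alpha A_def B_def)
  show ?thesis
    unfolding c len_alpha aa_cnt_alpha Ya Yb LY aY LZ A_def[symmetric] B_def[symmetric]
    by (simp add: qx qx' qy qy' algebra_simps)
qed

end
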